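(* Let $G=(V,E)$ be a finite, simple, undirected, connected graph, let $S\subseteq V$ be nonempty and let $\ell\geq 1$ be an integer. Then $S$ is an $\ell$-solid-resolving set of $G$ if and only if for every vertex $x\in V$ and every nonempty set $Y\subseteq V$ with $x\notin Y$ and $|Y|\leq \ell$ there exists $s\in S$ such that $d(s,x)<d(s,Y)$.
   Context: $d(u,v)$ denotes the shortest-path distance in $G$, and for a nonempty $X\subseteq V$, $d(s,X)=\min_{x\in X} d(s,x)$. For $S=\{s_1,\dots,s_k\}\subseteq V$ and nonempty $X\subseteq V$, the distance array is $\mathcal{D}_S(X)=(d(s_1,X),\dots,d(s_k,X))$. A set $S\subseteq V$ is an $\ell$-solid-resolving set of $G$ if for all distinct nonempty sets $X,Y\subseteq V$ with $|X|\leq \ell$ (and $Y$ of arbitrary size) we have $\mathcal{D}_S(X)\neq \mathcal{D}_S(Y)$. *)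

theory Defs
  imports Main
begin

definition simple_graph :: "'a set \<Rightarrow> ('a \<Rightarrow> 'a \<Rightarrow> bool) \<Rightarrow> bool" where
  "simple_graph V E \<longleftrightarrow> finite V \<and> (\<forall>u v. E u v \<longrightarrow> u \<in> V \<and> v \<in> V)
     \<and> (\<forall>u v. E u v \<longrightarrow> E v u) \<and> (\<forall>v. \<not> E v v)"

fun is_walk :: "('a \<Rightarrow> 'a \<Rightarrow> bool) \<Rightarrow> 'a list \<Rightarrow> bool" where
  "is_walk E [] = False"
| "is_walk E [x] = True"
| "is_walk E (x # y # xs) = (E x y \<and> is_walk E (y # xs))"

definition walk_betw :: "('a \<Rightarrow> 'a \<Rightarrow> bool) \<Rightarrow> 'a \<Rightarrow> 'a list \<Rightarrow> 'a \<Rightarrow> bool" where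
  "walk_betw E u p v \<longleftrightarrow> is_walk E p \<and> hd p = u \<and> last p = v"

definition connected_graph :: "'a set \<Rightarrow> ('a \<Rightarrow> 'a \<Rightarrow> bool) \<Rightarrow> bool" where
  "connected_graph V E \<longleftrightarrow> V \<noteq> {} \<and> (\<forall>u\<in>V. \<forall>v\<in>V. \<exists>p. walk_betw E u p v)"

definition dist :: "('a \<Rightarrow> 'a \<Rightarrow> bool) \<Rightarrow> 'a \<Rightarrow> 'a \<Rightarrow> nat" where
  "dist E u v = (LEAST n. \<exists>p. walk_betw E u p v \<and> length p = Suc n)"

definition set_dist :: "('a \<Rightarrow> 'a \<Rightarrow> bool) \<Rightarrow> 'a \<Rightarrow> 'a set \<Rightarrow> nat" where
  "set_dist E s X = Min (dist E s ` X)"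

text \<open>Distance array of X with respect to S: represented as the function s \<mapsto> d(s,X) on S.
  Two arrays are equal iff they agree at every s in S.\<close>

definition dist_array :: "('a \<Rightarrow> 'a \<Rightarrow> bool) \<Rightarrow> 'a set \<Rightarrow> 'a set \<Rightarrow> ('a \<Rightarrow> nat)" where
  "dist_array E S X = (\<lambda>s. if s \<in> S then set_dist E s X else 0)"

definition solid_resolving :: "'a set \<Rightarrow> ('a \<Rightarrow> 'a \<Rightarrow> bool) \<Rightarrow> nat \<Rightarrow> 'a set \<Rightarrow> bool" where
  "solid_resolving V E l S \<longleftrightarrow> S \<subseteq> V \<and>
     (\<forall>X Y. X \<subseteq> V \<and> Y \<subseteq> V \<and> X \<noteq> {} \<and> Y \<noteq> {} \<and> X \<noteq> Y \<and> card X \<le> l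
        \<longrightarrow> dist_array E S X \<noteq> dist_array E S Y)"

end

theory Submission
  imports Defs
begin

lemma sd_le: "finite X \<Longrightarrow> x \<in> X \<Longrightarrow> set_dist E s X \<le> dist E s x"
  unfolding set_dist_def by simp

lemma sd_insert: "finite Y \<Longrightarrow> Y \<noteq> {} \<Longrightarrow>
   set_dist E s (insert x Y) = min (dist E s x) (set_dist E s Y)"
  unfolding set_dist_def by (simp add: Min_insert)

theorem mainTheorem1:
  fixes V :: "'a set" and E :: "'a \<Rightarrow> 'a \<Rightarrow> bool" and S :: "'a set" and l :: nat
  assumes "simple_graph V E" and "connected_graph V E"
    and "S \<subseteq> V" and "S \<noteq> {}" and "l \<ge> 1"
  shows "solid_resolving V E l S \<longleftrightarrow>
    (\<forall>x\<in>V. \<forall>Y. Y \<subseteq> V \<and> Y \<noteq> {} \<and> x \<notin> Y \<and> card Y \<le> l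
       \<longrightarrow> (\<exists>s\<in>S. dist E s x < set_dist E s Y))"
proof -
  have fin: "finite V" using assms(1) unfolding simple_graph_def by blast
  show ?thesis
  proof
    assume sr: "solid_resolving V E l S"
    show "\<forall>x\<in>V. \<forall>Y. Y \<subseteq> V \<and> Y \<noteq> {} \<and> x \<notin> Y \<and> card Y \<le> l
       \<longrightarrow> (\<exists>s\<in>S. dist E s x < set_dist E s Y)"
    proof (intro ballI allI impI)
      fix x Y assume x: "x \<in> V" and Y: "Y \<subseteq> V \<and> Y \<noteq> {} \<and> x \<notin> Y \<and> card Y \<le> l"
      have fY: "finite Y" using Y fin finite_subset by blast
      have "dist_array E S Y \<noteq> dist_array E S (insert x Y)"
      proof -
        have "insert x Y \<noteq> Y" using Y by blast
        moreover have "insert x Y \<subseteq> V" using Y x by blast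
        moreover have "\<forall>X Y. X \<subseteq> V \<and> Y \<subseteq> V \<and> X \<noteq> {} \<and> Y \<noteq> {} \<and> X \<noteq> Y \<and> card X \<le> l
        \<longrightarrow> dist_array E S X \<noteq> dist_array E S Y" using sr unfolding solid_resolving_def by (rule conjunct2)
        ultimately show ?thesis using Y by (metis insert_not_empty)
      qed
      then obtain s where s0: "dist_array E S Y s \<noteq> dist_array E S (insert x Y) s"
        by (meson ext)
      have s: "s \<in> S" "set_dist E s Y \<noteq> set_dist E s (insert x Y)"
        using s0 unfolding dist_array_def by (simp_all split: if_splits)
      have "set_dist E s (insert x Y) = min (dist E s x) (set_dist E s Y)"
        using sd_insert[OF fY] Y by blast
      then have "dist E s x < set_dist E s Y" using s(2) by linarith
      then show "\<exists>s\<in>S. dist E s x < set_dist E s Y" using s(1) by blast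
    qed
  next
    assume H: "\<forall>x\<in>V. \<forall>Y. Y \<subseteq> V \<and> Y \<noteq> {} \<and> x \<notin> Y \<and> card Y \<le> l
       \<longrightarrow> (\<exists>s\<in>S. dist E s x < set_dist E s Y)"
    show "solid_resolving V E l S"
      unfolding solid_resolving_def
    proof (intro conjI allI impI)
      show "S \<subseteq> V" by fact
      fix X Y assume A: "X \<subseteq> V \<and> Y \<subseteq> V \<and> X \<noteq> {} \<and> Y \<noteq> {} \<and> X \<noteq> Y \<and> card X \<le> l"
      have fX: "finite X" and fY: "finite Y" using A fin finite_subset by blast+
      show "dist_array E S X \<noteq> dist_array E S Y"
      proof (cases "Y \<subseteq> X")
        case False
        then obtain y where y: "y \<in> Y" "y \<notin> X" by blast
        then obtain s where s: "s \<in> S" "dist E s y < set_dist E s X"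
          using H A y by (meson in_mono)
        have "set_dist E s Y < set_dist E s X" using sd_le[OF fY y(1), of E s] s by simp
        then have "dist_array E S X s \<noteq> dist_array E S Y s" using s(1) unfolding dist_array_def by simp
        then show ?thesis by metis
      next
        case True
        then have ps: "Y \<subset> X" using A by blast
        then obtain x where x: "x \<in> X" "x \<notin> Y" by blast
        have "card Y < card X" using psubset_card_mono[OF fX ps] .
        then obtain s where s: "s \<in> S" "dist E s x < set_dist E s Y"
          proof -
          have "card Y \<le> l" using \<open>card Y < card X\<close> A by linarith
          moreover have "x \<in> V" using A x by blast
          ultimately show ?thesis using H A x that by blast
        qed
        have "set_dist E s X < set_dist E s Y" using sd_le[OF fX x(1), of E s] s by simp
        then have "dist_array E S X s \<noteq> dist_array E S Y s" using s(1) unfolding dist_array_def by simp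
        then show ?thesis by metis
      qed
    qed
  qed
qed

end
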